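(* Let $Z_1,Z_2,\ldots$ be i.i.d. real-valued from a distribution with finite second moment and mean $\theta^*$, use the squared-error loss $\ell(\theta;z)=(z-\theta)^2$ on $\Theta=\mathbb{R}$, fix $\omega>0$ and $\alpha\in(0,1)$, and consider the online GUe-value $$G_{n,\mathrm{on}}(\theta)=\exp\Bigl[-\omega\sum_{i=1}^n\{(Z_i-\widehat\theta_{i-1})^2-(Z_i-\theta)^2\}\Bigr],$$ where $\widehat\theta_k=k^{-1}\sum_{i=1}^kZ_i$ for $k\ge1$ and $\widehat\theta_0$ is a fixed constant. There is a sufficiently large constant $C>0$ such that, for any sequence $(\theta_n)_{n\in\mathbb{N}}$ in $\mathbb{R}$ with $\theta_n-\theta^*\ge C\,(n/\log n)^{-1/2}$ for all large $n$, $$\lim_{n\to\infty}\Pr\{G_{n,\mathrm{on}}(\theta_n)\ge\alpha^{-1}\}=1.$$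
   Context: Under the squared-error loss the empirical risk minimizer on the first $k$ observations is their sample mean, which is the estimator used in the online GUe-value here. *)

theory Defs
  imports "HOL-Probability.Probability"
begin

definition theta_hat :: "(nat \<Rightarrow> 'a \<Rightarrow> real) \<Rightarrow> real \<Rightarrow> nat \<Rightarrow> 'a \<Rightarrow> real" where
  "theta_hat Z c k x = (if k = 0 then c else (\<Sum>i=1..k. Z i x) / real k)"

definition G_on :: "real \<Rightarrow> (nat \<Rightarrow> 'a \<Rightarrow> real) \<Rightarrow> real \<Rightarrow> nat \<Rightarrow> real \<Rightarrow> 'a \<Rightarrow> real" where
  "G_on \<omega> Z c n \<theta> x =
     exp (- \<omega> * (\<Sum>i=1..n. (Z i x - theta_hat Z c (i - 1) x)^2 - (Z i x - \<theta>)^2))"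

end

theory Submission
  imports Defs
begin


lemma (in prob_space) sq_sum_indep:
  fixes Y :: "nat \<Rightarrow> 'a \<Rightarrow> real"
  assumes ind: "indep_vars (\<lambda>_. borel) Y J" and fin: "finite J"
    and int: "\<And>i. i\<in>J \<Longrightarrow> integrable M (\<lambda>x. (Y i x)^2)"
    and mean0: "\<And>i. i\<in>J \<Longrightarrow> expectation (Y i) = 0"
  shows "integrable M (\<lambda>x. (\<Sum>i\<in>J. Y i x)^2)"
    and "expectation (\<lambda>x. (\<Sum>i\<in>J. Y i x)^2) = (\<Sum>i\<in>J. expectation (\<lambda>x. (Y i x)^2))"
proof -
  have rv: "Y i \<in> borel_measurable M" if "i \<in> J" for i
    using ind that unfolding indep_vars_def by auto
  have intY: "integrable M (Y i)" if "i \<in> J" for i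
    using square_integrable_imp_integrable[OF rv[OF that] int[OF that]] .
  have pr: "integrable M (\<lambda>x. Y i x * Y j x) \<and>
      expectation (\<lambda>x. Y i x * Y j x) = (if i = j then expectation (\<lambda>x. (Y i x)^2) else 0)"
    if "i \<in> J" "j \<in> J" for i j
  proof (cases "i = j")
    case True
    then show ?thesis using int[OF that(1)] by (simp add: power2_eq_square)
  next
    case False
    have ij: "indep_vars (\<lambda>_. borel) Y {i, j}"
      using indep_vars_subset[OF ind] that by auto
    have "integrable M (\<lambda>x. \<Prod>k\<in>{i,j}. Y k x)"
      by (rule indep_vars_integrable[OF _ ij]) (use intY that in auto)
    moreover have "expectation (\<lambda>x. \<Prod>k\<in>{i,j}. Y k x) = (\<Prod>k\<in>{i,j}. expectation (Y k))"
      by (rule indep_vars_lebesgue_integral[OF _ ij]) (use intY that in auto)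
    ultimately show ?thesis using False mean0 that by simp
  qed
  have eq: "(\<lambda>x. (\<Sum>i\<in>J. Y i x)^2) = (\<lambda>x. \<Sum>i\<in>J. \<Sum>j\<in>J. Y i x * Y j x)"
    by (simp add: power2_eq_square sum_product)
  show "integrable M (\<lambda>x. (\<Sum>i\<in>J. Y i x)^2)"
    unfolding eq using pr by (intro Bochner_Integration.integrable_sum) auto
  have "expectation (\<lambda>x. (\<Sum>i\<in>J. Y i x)^2) = (\<Sum>i\<in>J. \<Sum>j\<in>J. expectation (\<lambda>x. Y i x * Y j x))"
    unfolding eq using pr by (simp add: Bochner_Integration.integral_sum Bochner_Integration.integrable_sum)
  also have "\<dots> = (\<Sum>i\<in>J. \<Sum>j\<in>J. (if i = j then expectation (\<lambda>x. (Y i x)^2) else 0))"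
    using pr by (intro sum.cong) auto
  also have "\<dots> = (\<Sum>i\<in>J. expectation (\<lambda>x. (Y i x)^2))"
    using fin by (simp add: sum.delta)
  finally show "expectation (\<lambda>x. (\<Sum>i\<in>J. Y i x)^2) = (\<Sum>i\<in>J. expectation (\<lambda>x. (Y i x)^2))" .
qed

lemma harm_ln: "m \<ge> 1 \<Longrightarrow> (\<Sum>i=2..m. 1 / real i) \<le> ln (real m)"
proof (induction m rule: dec_induct)
  case base then show ?case by simp
next
  case (step n)
  have "ln (real n / real (Suc n)) \<le> real n / real (Suc n) - 1"
    using step by (intro ln_le_minus_one) auto
  also have "\<dots> = - 1 / real (Suc n)" by (simp add: field_simps)
  finally have "1 / real (Suc n) \<le> ln (real (Suc n)) - ln (real n)"
    using step by (simp add: ln_div)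
  moreover have "(\<Sum>i=2..Suc n. 1 / real i) = (\<Sum>i=2..n. 1 / real i) + 1 / real (Suc n)"
    using step by simp
  ultimately show ?case using step by linarith
qed

lemma telesc: "n \<ge> 1 \<Longrightarrow> (\<Sum>i=2..n. 1 / (real i * (real i - 1))) = 1 - 1 / real n"
proof (induction n)
  case 0 then show ?case by simp
next
  case (Suc n)
  show ?case
  proof (cases "n = 0")
    case True then show ?thesis by simp
  next
    case False
    then have "(\<Sum>i=2..Suc n. 1 / (real i * (real i - 1))) = 1 - 1 / real n + 1 / (real (Suc n) * real n)"
      using Suc by simp
    also have "\<dots> = 1 - 1 / real (Suc n)"
    proof -
      have "real n > 0" using False by simp
      then have "real n + real n * real n > 0" by (simp add: add_pos_pos)
      then show ?thesis using \<open>real n > 0\<close> by (simp add: field_simps)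
    qed
    finally show ?thesis .
  qed
qed




lemma prequential:
  fixes x :: "nat \<Rightarrow> real" and c :: real
  assumes "n \<ge> 1"
  shows "(\<Sum>i=1..n. (x i - (if i - 1 = 0 then c else (\<Sum>j=1..i-1. x j) / real (i-1)))^2) =
    (\<Sum>i=1..n. (x i)^2) - (\<Sum>i=1..n. x i)^2 / real n + (x 1 - c)^2 +
    (\<Sum>i=2..n. (1 / real i) * (x i - (if i - 1 = 0 then c else (\<Sum>j=1..i-1. x j) / real (i-1)))^2)"
  using assms
proof (induction n rule: dec_induct)
  case base then show ?case by simp
next
  case (step n)
  define S where "S = (\<Sum>j=1..n. x j)"
  define y where "y = x (Suc n)"
  have n0: "real n > 0" using step by simp
  have key: "(y - S / real n)^2 = y^2 - (S + y)^2 / real (Suc n) + S^2 / real n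
      + (1 / real (Suc n)) * (y - S / real n)^2"
  proof -
    define t where "t = S / real n"
    have St: "S = real n * t" using n0 by (simp add: t_def)
    have m1: "real (Suc n) = real n + 1" by simp
    have "(y - t)^2 = y^2 - (real n * t + y)^2 / (real n + 1) + real n * t^2 + (1 / (real n + 1)) * (y - t)^2"
    proof -
      have d: "real n + 1 > 0" using n0 by simp
      have e: "(real n * t + y)^2 - (y - t)^2 = (real n + 1) * (y^2 + real n * t^2 - (y - t)^2)"
        by (simp add: power2_eq_square algebra_simps)
      have "((real n * t + y)^2 - (y - t)^2) / (real n + 1) = y^2 + real n * t^2 - (y - t)^2"
        using d by (simp add: e)
      moreover have "(real n * t + y)^2 / (real n + 1) - (1 / (real n + 1)) * (y - t)^2
          = ((real n * t + y)^2 - (y - t)^2) / (real n + 1)"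
        by (simp add: diff_divide_distrib)
      ultimately show ?thesis by linarith
    qed
    then show ?thesis unfolding m1 St using n0 by (simp add: t_def power2_eq_square)
  qed
  have thn: "(if Suc n - 1 = 0 then c else (\<Sum>j=1..Suc n - 1. x j) / real (Suc n - 1)) = S / real n"
    using step by (simp add: S_def)
  have sS: "(\<Sum>i=1..Suc n. x i) = S + y" by (simp add: S_def y_def)
  show ?case
    using step.IH key thn sS step.hyps
    by (simp add: y_def[symmetric] S_def[symmetric])
qed

lemma regret_identity:
  fixes x :: "nat \<Rightarrow> real" and c a :: real
  assumes "n \<ge> 1"
  shows "(\<Sum>i=1..n. (x i - (if i - 1 = 0 then c else (\<Sum>j=1..i-1. x j) / real (i-1)))^2 - (x i - a)^2) =
    (x 1 - c)^2 +
    (\<Sum>i=2..n. (1 / real i) * (x i - (if i - 1 = 0 then c else (\<Sum>j=1..i-1. x j) / real (i-1)))^2)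
    - real n * ((\<Sum>i=1..n. x i) / real n - a)^2"
proof -
  have n0: "real n > 0" using assms by simp
  have "(\<Sum>i=1..n. (x i - a)^2) = (\<Sum>i=1..n. (x i)^2) - 2 * a * (\<Sum>i=1..n. x i) + real n * a^2"
    by (simp add: power2_diff sum.distrib sum_subtractf sum_distrib_left sum_distrib_right algebra_simps)
  moreover have "real n * ((\<Sum>i=1..n. x i) / real n - a)^2 = (\<Sum>i=1..n. x i)^2 / real n - 2 * a * (\<Sum>i=1..n. x i) + real n * a^2"
    using n0 by (simp add: field_simps power2_eq_square)
  ultimately show ?thesis
    using prequential[OF assms, of x c] by (simp add: sum_subtractf)
qed




locale gue = prob_space M for M :: "'a measure" +
  fixes Z :: "nat \<Rightarrow> 'a \<Rightarrow> real" and mu :: real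
  assumes meas: "\<And>i. i \<ge> 1 \<Longrightarrow> Z i \<in> borel_measurable M"
    and indep: "indep_vars (\<lambda>_. borel) Z {1..}"
    and ident: "\<And>i. i \<ge> 1 \<Longrightarrow> distr M borel (Z i) = distr M borel (Z 1)"
    and sm: "integrable M (\<lambda>x. (Z 1 x)^2)"
    and mean: "expectation (Z 1) = mu"
begin

definition V where "V = expectation (\<lambda>x. (Z 1 x - mu)^2)"

lemma same_int:
  assumes "i \<ge> 1" and g: "g \<in> borel_measurable borel"
  shows "integrable M (\<lambda>x. g (Z i x)) \<longleftrightarrow> integrable M (\<lambda>x. (g (Z 1 x)::real))"
proof -
  have "integrable M (\<lambda>x. g (Z i x)) \<longleftrightarrow> integrable (distr M borel (Z i)) g"
    using meas[OF assms(1)] g by (simp add: integrable_distr_eq)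
  also have "\<dots> \<longleftrightarrow> integrable (distr M borel (Z 1)) g" using ident[OF assms(1)] by simp
  also have "\<dots> \<longleftrightarrow> integrable M (\<lambda>x. g (Z 1 x))"
    using meas[of 1] g by (simp add: integrable_distr_eq)
  finally show ?thesis .
qed

lemma same_exp:
  assumes "i \<ge> 1" and g: "g \<in> borel_measurable borel"
  shows "expectation (\<lambda>x. g (Z i x)) = expectation (\<lambda>x. (g (Z 1 x)::real))"
proof -
  have "expectation (\<lambda>x. g (Z i x)) = integral\<^sup>L (distr M borel (Z i)) g"
    using meas[OF assms(1)] g by (simp add: integral_distr)
  also have "\<dots> = integral\<^sup>L (distr M borel (Z 1)) g" using ident[OF assms(1)] by simp
  also have "\<dots> = expectation (\<lambda>x. g (Z 1 x))"
    using meas[of 1] g by (simp add: integral_distr)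
  finally show ?thesis .
qed

lemma Z1_int: "integrable M (Z 1)"
  using square_integrable_imp_integrable[OF meas[of 1] sm] by simp

lemma W1_int: "integrable M (\<lambda>x. (Z 1 x - mu)^2)"
proof -
  have "(\<lambda>x. (Z 1 x - mu)^2) = (\<lambda>x. (Z 1 x)^2 - 2 * mu * Z 1 x + mu^2)"
    by (simp add: power2_diff algebra_simps)
  then show ?thesis using sm Z1_int by simp
qed

lemma V_nonneg: "V \<ge> 0"
  unfolding V_def by simp

lemma X_facts:
  assumes "i \<ge> 1"
  shows "integrable M (\<lambda>x. Z i x - mu)" "expectation (\<lambda>x. Z i x - mu) = 0"
    "integrable M (\<lambda>x. (Z i x - mu)^2)" "expectation (\<lambda>x. (Z i x - mu)^2) = V"
proof -
  have g1: "(\<lambda>z::real. z - mu) \<in> borel_measurable borel" by measurable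
  have g2: "(\<lambda>z::real. (z - mu)^2) \<in> borel_measurable borel" by measurable
  have i1: "integrable M (\<lambda>x. Z 1 x - mu)" using Z1_int by simp
  show "integrable M (\<lambda>x. Z i x - mu)" using same_int[OF assms g1] i1 by simp
  show "expectation (\<lambda>x. Z i x - mu) = 0" using same_exp[OF assms g1] Z1_int mean
    by (simp add: prob_space)
  show "integrable M (\<lambda>x. (Z i x - mu)^2)" using same_int[OF assms g2] W1_int by simp
  show "expectation (\<lambda>x. (Z i x - mu)^2) = V" using same_exp[OF assms g2] V_def by simp
qed

lemma sumX:
  assumes "finite J" "J \<subseteq> {1..}"
  shows "integrable M (\<lambda>x. (\<Sum>i\<in>J. Z i x - mu)^2)"
    "expectation (\<lambda>x. (\<Sum>i\<in>J. Z i x - mu)^2) = real (card J) * V"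
proof -
  have ind: "indep_vars (\<lambda>_. borel) (\<lambda>i x. Z i x - mu) J"
    using indep_vars_compose2[OF indep_vars_subset[OF indep assms(2)], of "\<lambda>i z. z - mu" "\<lambda>_. borel"]
    by simp
  have F: "\<And>i. i \<in> J \<Longrightarrow> i \<ge> 1" using assms by auto
  show "integrable M (\<lambda>x. (\<Sum>i\<in>J. Z i x - mu)^2)"
    by (rule sq_sum_indep(1)[OF ind assms(1)]) (use X_facts F in auto)
  have "expectation (\<lambda>x. (\<Sum>i\<in>J. Z i x - mu)^2) = (\<Sum>i\<in>J. expectation (\<lambda>x. (Z i x - mu)^2))"
    by (rule sq_sum_indep(2)[OF ind assms(1)]) (use X_facts F in auto)
  also have "\<dots> = (\<Sum>i\<in>J. V)" using X_facts F by simp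
  finally show "expectation (\<lambda>x. (\<Sum>i\<in>J. Z i x - mu)^2) = real (card J) * V" by simp
qed

end



context gue begin

lemma X_meas: "i \<ge> 1 \<Longrightarrow> (\<lambda>x. Z i x - mu) \<in> borel_measurable M"
  using meas by simp

lemma bound1:
  assumes "n \<ge> 1" "t > 0"
  shows "prob {x\<in>space M. \<bar>\<Sum>i=1..n. Z i x - mu\<bar> \<ge> t} \<le> real n * V / t^2"
proof -
  have J: "finite {1..n}" "{1..n} \<subseteq> {1..}" by auto
  have m: "(\<lambda>x. \<Sum>i=1..n. Z i x - mu) \<in> borel_measurable M"
    by (rule borel_measurable_sum) (use meas in auto)
  have "prob {x\<in>space M. \<bar>\<Sum>i=1..n. Z i x - mu\<bar> \<ge> t} \<le> expectation (\<lambda>x. (\<Sum>i=1..n. Z i x - mu)^2) / t^2"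
    by (rule second_moment_method[OF m sumX(1)[OF J] assms(2)])
  also have "\<dots> = real n * V / t^2" using sumX(2)[OF J] by simp
  finally show ?thesis .
qed

definition Ec where "Ec c = expectation (\<lambda>x. (Z 1 x - c)^2)"

lemma bound2:
  assumes "t > 0"
  shows "prob {x\<in>space M. (Z 1 x - c)^2 \<ge> t} \<le> Ec c / t"
proof -
  have "(\<lambda>x. (Z 1 x - c)^2) = (\<lambda>x. (Z 1 x)^2 - 2 * c * Z 1 x + c^2)"
    by (simp add: power2_diff algebra_simps)
  then have i: "integrable M (\<lambda>x. (Z 1 x - c)^2)" using sm Z1_int by simp
  show ?thesis unfolding Ec_def
    by (rule integral_Markov_inequality_measure[OF i _ _ assms, where A="space M"]) auto
qed

definition R where "R n x = (\<Sum>i=2..n. (1 / real i) * ((\<Sum>j=1..i-1. Z j x - mu) / real (i - 1))^2)"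

lemma R_int: "integrable M (R n)" and R_exp: "expectation (R n) \<le> V"
proof -
  have ii: "integrable M (\<lambda>x. (1 / real i) * ((\<Sum>j=1..i-1. Z j x - mu) / real (i - 1))^2)" if "i \<in> {2..n}" for i
  proof -
    have "integrable M (\<lambda>x. (\<Sum>j=1..i-1. Z j x - mu)^2)" by (rule sumX(1)) auto
    then show ?thesis by (simp add: power_divide)
  qed
  show "integrable M (R n)" unfolding R_def[abs_def] using ii by (intro Bochner_Integration.integrable_sum) auto
  have "expectation (R n) = (\<Sum>i=2..n. expectation (\<lambda>x. (1 / real i) * ((\<Sum>j=1..i-1. Z j x - mu) / real (i - 1))^2))"
    unfolding R_def[abs_def] using ii by (simp add: Bochner_Integration.integral_sum)
  also have "\<dots> = (\<Sum>i=2..n. V * (1 / (real i * (real i - 1))))"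
  proof (intro sum.cong refl)
    fix i assume i: "i \<in> {2..n}"
    define m where "m = real i - 1"
    have m: "real (i - 1) = m" "m > 0" using i by (auto simp: m_def)
    have E: "expectation (\<lambda>x. (\<Sum>j=1..i-1. Z j x - mu)^2) = m * V" using sumX(2)[of "{1..i-1}"] m by auto
    have f: "(\<lambda>x. (1 / real i) * ((\<Sum>j=1..i-1. Z j x - mu) / real (i - 1))^2)
       = (\<lambda>x. (1 / (real i * m^2)) * (\<Sum>j=1..i-1. Z j x - mu)^2)"
      using m by (simp add: power_divide)
    have "expectation (\<lambda>x. (1 / real i) * ((\<Sum>j=1..i-1. Z j x - mu) / real (i - 1))^2) = (1 / (real i * m^2)) * (m * V)"
      unfolding f integral_mult_right_zero E by simp
    also have "\<dots> = V * (1 / (real i * (real i - 1)))" using m by (simp add: m_def[symmetric] power2_eq_square)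
    finally show "expectation (\<lambda>x. (1 / real i) * ((\<Sum>j=1..i-1. Z j x - mu) / real (i - 1))^2) = V * (1 / (real i * (real i - 1)))" .
  qed
  also have "\<dots> = V * (\<Sum>i=2..n. 1 / (real i * (real i - 1)))" by (simp add: sum_distrib_left)
  also have "\<dots> \<le> V"
  proof (cases "n \<ge> 1")
    case True
    then show ?thesis using telesc[OF True] V_nonneg by (simp add: mult_left_le)
  next
    case False then show ?thesis using V_nonneg by simp
  qed
  finally show "expectation (R n) \<le> V" .
qed

lemma R_nonneg: "R n x \<ge> 0"
  unfolding R_def by (intro sum_nonneg) auto

lemma bound3:
  assumes "t > 0"
  shows "prob {x\<in>space M. R n x \<ge> t} \<le> V / t"
proof -
  have "prob {x\<in>space M. R n x \<ge> t} \<le> expectation (R n) / t"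
    by (rule integral_Markov_inequality_measure[OF R_int _ _ assms, where A="space M"]) (auto simp: R_nonneg)
  also have "\<dots> \<le> V / t" using R_exp assms by (simp add: divide_right_mono)
  finally show ?thesis .
qed

end



definition tr :: "nat \<Rightarrow> real \<Rightarrow> real" where "tr i w = (if w \<le> real i then w else 0)"

lemma tr_bounds:
  assumes "0 \<le> w"
  shows "0 \<le> tr i w" "tr i w \<le> w" "tr i w \<le> real i" "(tr i w)^2 \<le> real i * w"
  using assms by (auto simp: tr_def power2_eq_square intro: mult_right_mono)

lemma tr_meas[measurable]: "tr i \<in> borel_measurable borel"
  unfolding tr_def[abs_def] by measurable

context gue begin

definition mt where "mt i = expectation (\<lambda>x. tr i ((Z 1 x - mu)^2))"
definition Yv where "Yv i x = (1 / real i) * (tr i ((Z i x - mu)^2) - mt i)"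

lemma tr_intj: "j \<ge> 1 \<Longrightarrow> integrable M (\<lambda>x. tr i ((Z j x - mu)^2))"
  by (rule integrable_const_bound[where B="real i"]) (use meas tr_bounds in auto)

lemma tr_int: "i \<ge> 1 \<Longrightarrow> integrable M (\<lambda>x. tr i ((Z i x - mu)^2))"
  by (rule tr_intj)

lemma tr_int2: "i \<ge> 1 \<Longrightarrow> integrable M (\<lambda>x. (tr i ((Z i x - mu)^2))^2)"
  by (rule integrable_const_bound[where B="real i ^ 2"])
     (use meas tr_bounds in \<open>auto intro!: power_mono\<close>)

lemma tr_exp: "i \<ge> 1 \<Longrightarrow> expectation (\<lambda>x. tr i ((Z i x - mu)^2)) = mt i"
  unfolding mt_def by (rule same_exp) auto

lemma mt_le: "mt i \<le> V"
  unfolding mt_def V_def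
  by (rule integral_mono) (use tr_intj[of 1 i] W1_int tr_bounds in auto)

lemma mt_nonneg: "0 \<le> mt i"
  unfolding mt_def by (rule integral_nonneg_AE) (auto simp: tr_bounds)

lemma Yv_meas: "i \<ge> 1 \<Longrightarrow> Yv i \<in> borel_measurable M"
  unfolding Yv_def[abs_def] using meas by simp

lemma Yv_int2: assumes "i \<ge> 1" shows "integrable M (\<lambda>x. (Yv i x)^2)"
proof -
  have eq: "(\<lambda>x. (Yv i x)^2) = (\<lambda>x. (1 / real i)^2 * ((tr i ((Z i x - mu)^2))^2 - 2 * mt i * tr i ((Z i x - mu)^2) + (mt i)^2))"
    unfolding Yv_def power_mult_distrib power2_diff by (simp add: algebra_simps)
  show ?thesis unfolding eq using tr_int[OF assms] tr_int2[OF assms] by simp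
qed

lemma Yv_mean: "i \<ge> 1 \<Longrightarrow> expectation (Yv i) = 0"
  unfolding Yv_def using tr_int[of i] tr_exp[of i] by (simp add: prob_space)

lemma Yv_sq: assumes "i \<ge> 1" shows "expectation (\<lambda>x. (Yv i x)^2) \<le> V / real i"
proof -
  have eq: "(\<lambda>x. (Yv i x)^2) = (\<lambda>x. (1 / real i)^2 * ((tr i ((Z i x - mu)^2))^2 - 2 * mt i * tr i ((Z i x - mu)^2) + (mt i)^2))"
    unfolding Yv_def power_mult_distrib power2_diff by (simp add: algebra_simps)
  have "expectation (\<lambda>x. (Yv i x)^2) = (1 / real i)^2 * (expectation (\<lambda>x. (tr i ((Z i x - mu)^2))^2) - 2 * mt i * mt i + (mt i)^2)"
    unfolding eq using tr_int[OF assms] tr_int2[OF assms] tr_exp[OF assms] by (simp add: prob_space)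
  also have "\<dots> \<le> (1 / real i)^2 * expectation (\<lambda>x. (tr i ((Z i x - mu)^2))^2)"
    by (intro mult_left_mono) (auto simp: power2_eq_square)
  also have "expectation (\<lambda>x. (tr i ((Z i x - mu)^2))^2) \<le> expectation (\<lambda>x. real i * (Z i x - mu)^2)"
    by (rule integral_mono) (use tr_int2[OF assms] X_facts[OF assms] tr_bounds in auto)
  also have "\<dots> = real i * V" using X_facts[OF assms] by simp
  finally show ?thesis using assms by (simp add: power2_eq_square field_simps mult_left_mono)
qed

lemma bound4:
  assumes "n \<ge> 1" "t > 0"
  shows "prob {x\<in>space M. \<bar>\<Sum>i=2..n. Yv i x\<bar> \<ge> t} \<le> V * ln (real n) / t^2"
proof -
  define h where "h i z = (1 / real i) * (tr i ((z - mu)^2) - mt i)" for i z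
  have ind0: "indep_vars (\<lambda>_. borel) (\<lambda>i x. h i (Z i x)) {2..n}"
    by (rule indep_vars_compose2[OF indep_vars_subset[OF indep]]) (auto simp: h_def[abs_def])
  have ind: "indep_vars (\<lambda>_. borel) Yv {2..n}"
    using ind0 by (simp add: h_def[abs_def] Yv_def[abs_def])
  have m: "(\<lambda>x. \<Sum>i=2..n. Yv i x) \<in> borel_measurable M"
    by (rule borel_measurable_sum) (use Yv_meas in auto)
  have "prob {x\<in>space M. \<bar>\<Sum>i=2..n. Yv i x\<bar> \<ge> t} \<le> expectation (\<lambda>x. (\<Sum>i=2..n. Yv i x)^2) / t^2"
    by (rule second_moment_method[OF m sq_sum_indep(1)[OF ind] assms(2)]) (use Yv_int2 Yv_mean in auto)
  also have "expectation (\<lambda>x. (\<Sum>i=2..n. Yv i x)^2) = (\<Sum>i=2..n. expectation (\<lambda>x. (Yv i x)^2))"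
    by (rule sq_sum_indep(2)[OF ind]) (use Yv_int2 Yv_mean in auto)
  also have "\<dots> \<le> (\<Sum>i=2..n. V * (1 / real i))"
    by (rule sum_mono) (use Yv_sq in auto)
  also have "\<dots> = V * (\<Sum>i=2..n. 1 / real i)" by (simp add: sum_distrib_left)
  also have "\<dots> \<le> V * ln (real n)" using harm_ln[OF assms(1)] V_nonneg by (simp add: mult_left_mono)
  finally show ?thesis using assms by (simp add: divide_right_mono)
qed

definition Tn where "Tn n x = (\<Sum>i=2..n. (1 / real i) * ((Z i x - mu)^2 - tr i ((Z i x - mu)^2)))"

lemma bound5:
  assumes "t > 0"
  shows "prob {x\<in>space M. Tn n x \<ge> t} \<le> (\<Sum>i=2..n. (V - mt i) / real i) / t"
proof -
  have ii: "integrable M (\<lambda>x. (1 / real i) * ((Z i x - mu)^2 - tr i ((Z i x - mu)^2)))" if "i \<in> {2..n}" for i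
    using that X_facts[of i] tr_int[of i] by simp
  have int: "integrable M (Tn n)" unfolding Tn_def[abs_def] using ii by (intro Bochner_Integration.integrable_sum) auto
  have ex: "expectation (Tn n) = (\<Sum>i=2..n. (V - mt i) / real i)"
    unfolding Tn_def[abs_def] using ii X_facts tr_int tr_exp
    by (simp add: Bochner_Integration.integral_sum)
  have nn: "Tn n x \<ge> 0" for x
    unfolding Tn_def by (intro sum_nonneg) (auto simp: tr_bounds)
  show ?thesis unfolding ex[symmetric]
    by (rule integral_Markov_inequality_measure[OF int _ _ assms, where A="space M"]) (auto simp: nn)
qed

end



lemma ln_seq_at_top: "filterlim (\<lambda>n::nat. ln (real n)) at_top sequentially"
  by (rule filterlim_compose[OF ln_at_top filterlim_real_sequentially])

lemma const_div_ln: "(\<lambda>n::nat. A / ln (real n)) \<longlonglongrightarrow> 0"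
  by (rule tendsto_divide_0[OF tendsto_const]) (rule filterlim_at_top_imp_at_infinity[OF ln_seq_at_top])

lemma log_cesaro:
  fixes e :: "nat \<Rightarrow> real"
  assumes nn: "\<And>i. 0 \<le> e i" and lim: "e \<longlonglongrightarrow> 0"
  shows "(\<lambda>n. (\<Sum>i=2..n. e i / real i) / ln (real n)) \<longlonglongrightarrow> 0"
proof (rule LIMSEQ_I)
  fix r :: real assume r: "0 < r"
  obtain N where N: "\<And>i. i \<ge> N \<Longrightarrow> e i < r / 2"
    using LIMSEQ_D[OF lim, of "r/2"] r nn by auto
  define A where "A = (\<Sum>i=2..N. e i / real i)"
  obtain n1 where n1: "\<And>n. n \<ge> n1 \<Longrightarrow> norm (A / ln (real n)) < r / 2"
    using LIMSEQ_D[OF const_div_ln[of A], of "r/2"] r by auto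
  show "\<exists>no. \<forall>n\<ge>no. norm ((\<Sum>i=2..n. e i / real i) / ln (real n) - 0) < r"
  proof (intro exI allI impI)
    fix n assume n: "n \<ge> max (max n1 N) 3"
    have ln0: "ln (real n) > 0" using n by auto
    define g where "g i = (if i \<le> N then e i / real i else 0)" for i
    have "(\<Sum>i=2..n. e i / real i) \<le> (\<Sum>i=2..n. g i + (r/2) * (1 / real i))"
    proof (rule sum_mono)
      fix i assume i: "i \<in> {2..n}"
      show "e i / real i \<le> g i + (r/2) * (1 / real i)"
      proof (cases "i \<le> N")
        case True then show ?thesis using r i by (simp add: g_def)
      next
        case False
        then have "e i \<le> r / 2" using N[of i] by auto
        then have "e i / real i \<le> (r/2) / real i" by (rule divide_right_mono) auto
        then show ?thesis using False i by (simp add: g_def)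
      qed
    qed
    also have "\<dots> = (\<Sum>i=2..n. g i) + (r/2) * (\<Sum>i=2..n. 1 / real i)"
      by (simp add: sum.distrib sum_distrib_left)
    also have "(\<Sum>i=2..n. g i) \<le> A"
    proof -
      have "(\<Sum>i=2..n. g i) = (\<Sum>i\<in>{2..n} \<inter> {..N}. e i / real i)"
        unfolding g_def by (subst sum.inter_restrict) auto
      also have "\<dots> \<le> A" unfolding A_def
        by (rule sum_mono2) (use nn in \<open>auto\<close>)
      finally show ?thesis .
    qed
    also have "(\<Sum>i=2..n. 1 / real i) \<le> ln (real n)" using harm_ln[of n] n by auto
    finally have le: "(\<Sum>i=2..n. e i / real i) \<le> A + (r/2) * ln (real n)" using r by simp
    have ge: "0 \<le> (\<Sum>i=2..n. e i / real i)" using nn by (intro sum_nonneg) auto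
    have "norm (A / ln (real n)) < r / 2" using n1[of n] n by auto
    then have "A / ln (real n) < r / 2" unfolding real_norm_def by linarith
    then have "(\<Sum>i=2..n. e i / real i) / ln (real n) < r"
      using le ln0 by (simp add: field_simps)
    then show "norm ((\<Sum>i=2..n. e i / real i) / ln (real n) - 0) < r"
      using ge ln0 by simp
  qed
qed

context gue begin

lemma mt_lim: "mt \<longlonglongrightarrow> V"
  unfolding mt_def[abs_def] V_def
proof (rule integral_dominated_convergence[where w="\<lambda>x. (Z 1 x - mu)^2"])
  show "(\<lambda>x. (Z 1 x - mu)^2) \<in> borel_measurable M" using meas by simp
  show "\<And>i. (\<lambda>x. tr i ((Z 1 x - mu)^2)) \<in> borel_measurable M" using meas by simp
  show "integrable M (\<lambda>x. (Z 1 x - mu)^2)" by (rule W1_int)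
  show "AE x in M. (\<lambda>i. tr i ((Z 1 x - mu)^2)) \<longlonglongrightarrow> (Z 1 x - mu)^2"
  proof (intro AE_I2 tendsto_eventually)
    fix x
    show "\<forall>\<^sub>F i in sequentially. tr i ((Z 1 x - mu)^2) = (Z 1 x - mu)^2"
      unfolding eventually_sequentially tr_def
      by (rule exI[of _ "nat \<lceil>(Z 1 x - mu)^2\<rceil>"]) (auto simp: nat_le_iff ceiling_le_iff)
  qed
  show "\<And>i. AE x in M. norm (tr i ((Z 1 x - mu)^2)) \<le> (Z 1 x - mu)^2"
    using tr_bounds by auto
qed

lemma eps_lim: "(\<lambda>n. (\<Sum>i=2..n. (V - mt i) / real i) / ln (real n)) \<longlonglongrightarrow> 0"
proof (rule log_cesaro)
  show "\<And>i. 0 \<le> V - mt i" using mt_le by auto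
  show "(\<lambda>i. V - mt i) \<longlonglongrightarrow> 0" using tendsto_diff[OF tendsto_const mt_lim, of V] by simp
qed

end



lemma powr_conv:
  assumes "n \<ge> 3"
  shows "(real n / ln (real n)) powr (-1/2) = sqrt (ln (real n) / real n)"
proof -
  have L: "ln (real n) > 0" using assms by simp
  have q: "real n / ln (real n) > 0" using assms L by simp
  have "(real n / ln (real n)) powr (-1/2) = inverse ((real n / ln (real n)) powr (1/2))"
    using q by (simp add: powr_minus[symmetric])
  also have "\<dots> = inverse (sqrt (real n / ln (real n)))" using q by (simp add: powr_half_sqrt)
  also have "\<dots> = sqrt (ln (real n) / real n)" by (simp add: real_sqrt_inverse[symmetric])
  finally show ?thesis .
qed

context gue begin

lemma G_meas: "G_on \<omega> Z c n \<theta> \<in> borel_measurable M"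
proof -
  have t: "(\<lambda>x. (Z i x - theta_hat Z c (i - 1) x)^2 - (Z i x - \<theta>)^2) \<in> borel_measurable M"
    if i: "i \<in> {1..n}" for i
  proof -
    have zi[measurable]: "Z i \<in> borel_measurable M" using meas i by auto
    have s[measurable]: "(\<lambda>x. \<Sum>j=1..i-1. Z j x) \<in> borel_measurable M"
      by (rule borel_measurable_sum) (use meas in auto)
    have th[measurable]: "theta_hat Z c (i - 1) \<in> borel_measurable M"
      unfolding theta_hat_def[abs_def] by (cases "i - 1 = 0") (use s in simp_all)
    show ?thesis by measurable
  qed
  have [measurable]: "(\<lambda>x. \<Sum>i=1..n. (Z i x - theta_hat Z c (i - 1) x)^2 - (Z i x - \<theta>)^2) \<in> borel_measurable M"
    by (rule borel_measurable_sum) (use t in auto)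
  show ?thesis unfolding G_on_def[abs_def] by measurable
qed

end



context gue begin

lemma good_implies:
  assumes n3: "n \<ge> 3" and om: "\<omega> > 0" and al: "0 < \<alpha>"
    and LK: "ln (real n) \<ge> - ln \<alpha> / \<omega>"
    and th: "\<theta> - mu \<ge> (2*V+10) * sqrt (ln (real n) / real n)"
    and g1: "\<bar>\<Sum>i=1..n. Z i x - mu\<bar> < real n * sqrt (ln (real n) / real n)"
    and g2: "(Z 1 x - c)^2 < ln (real n)"
    and g3: "R n x < ln (real n)"
    and g4: "\<bar>\<Sum>i=2..n. Yv i x\<bar> < ln (real n)"
    and g5: "Tn n x < ln (real n)"
  shows "G_on \<omega> Z c n \<theta> x \<ge> 1 / \<alpha>"
proof -
  define L where "L = ln (real n)"
  define r where "r = sqrt (L / real n)"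
  have n0: "real n > 0" using n3 by simp
  have L0: "L > 0" unfolding L_def using n3 by simp
  have r0: "r > 0" unfolding r_def using L0 n0 by simp
  have r2: "real n * r^2 = L" unfolding r_def using L0 n0 by simp
  define th where "th i = (if i - 1 = 0 then c else (\<Sum>j=1..i-1. Z j x) / real (i-1))" for i
  have thh: "theta_hat Z c (i - 1) x = th i" for i unfolding theta_hat_def th_def by simp
  define S where "S = (\<Sum>i=2..n. (1 / real i) * (Z i x - th i)^2)"
  define Q where "Q = (\<Sum>i=1..n. (Z i x - theta_hat Z c (i - 1) x)^2 - (Z i x - \<theta>)^2)"
  have Qeq: "Q = (Z 1 x - c)^2 + S - real n * ((\<Sum>i=1..n. Z i x) / real n - \<theta>)^2"
    unfolding Q_def S_def thh th_def using regret_identity[of n "\<lambda>i. Z i x" c \<theta>] n3 by simp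
  have trm: "(1 / real i) * (Z i x - th i)^2 \<le> 2 * ((1 / real i) * (Z i x - mu)^2)
      + 2 * ((1 / real i) * ((\<Sum>j=1..i-1. Z j x - mu) / real (i - 1))^2)" if i: "i \<in> {2..n}" for i
  proof -
    have i1: "real (i - 1) > 0" using i by auto
    have "(\<Sum>j=1..i-1. Z j x - mu) = (\<Sum>j=1..i-1. Z j x) - real (i - 1) * mu"
      by (simp add: sum_subtractf)
    then have "th i = mu + (\<Sum>j=1..i-1. Z j x - mu) / real (i - 1)"
      using i i1 by (simp add: th_def field_simps)
    then have e: "Z i x - th i = (Z i x - mu) - (\<Sum>j=1..i-1. Z j x - mu) / real (i - 1)" by simp
    have sq: "(a - b)^2 \<le> 2 * a^2 + 2 * b^2" for a b :: real
      using sum_squares_ge_zero[of "a+b" 0] by (simp add: power2_eq_square algebra_simps)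
    have "(Z i x - th i)^2 \<le> 2 * (Z i x - mu)^2 + 2 * ((\<Sum>j=1..i-1. Z j x - mu) / real (i - 1))^2"
      unfolding e by (rule sq)
    then have "(1 / real i) * (Z i x - th i)^2 \<le> (1 / real i) * (2 * (Z i x - mu)^2 + 2 * ((\<Sum>j=1..i-1. Z j x - mu) / real (i - 1))^2)"
      by (rule mult_left_mono) auto
    then show ?thesis by (simp add: algebra_simps)
  qed
  have S1: "S \<le> 2 * (\<Sum>i=2..n. (1 / real i) * (Z i x - mu)^2) + 2 * R n x"
  proof -
    have "S \<le> (\<Sum>i=2..n. 2 * ((1 / real i) * (Z i x - mu)^2)
      + 2 * ((1 / real i) * ((\<Sum>j=1..i-1. Z j x - mu) / real (i - 1))^2))"
      unfolding S_def by (rule sum_mono) (rule trm)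
    also have "\<dots> = 2 * (\<Sum>i=2..n. (1 / real i) * (Z i x - mu)^2) + 2 * R n x"
      unfolding R_def by (simp only: sum.distrib sum_distrib_left)
    finally show ?thesis .
  qed
  have split: "(1 / real i) * (Z i x - mu)^2 = Yv i x + mt i * (1 / real i)
      + (1 / real i) * ((Z i x - mu)^2 - tr i ((Z i x - mu)^2))" for i
    unfolding Yv_def by (simp add: algebra_simps)
  have S2: "(\<Sum>i=2..n. (1 / real i) * (Z i x - mu)^2) = (\<Sum>i=2..n. Yv i x) + (\<Sum>i=2..n. mt i * (1 / real i)) + Tn n x"
    unfolding split Tn_def by (simp add: sum.distrib)
  have S3: "(\<Sum>i=2..n. mt i * (1 / real i)) \<le> V * L"
  proof -
    have "(\<Sum>i=2..n. mt i * (1 / real i)) \<le> (\<Sum>i=2..n. V * (1 / real i))"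
      by (rule sum_mono) (use mt_le in \<open>auto intro: divide_right_mono\<close>)
    also have "\<dots> = V * (\<Sum>i=2..n. 1 / real i)" by (simp add: sum_distrib_left)
    also have "\<dots> \<le> V * L" unfolding L_def using harm_ln[of n] n3 V_nonneg by (simp add: mult_left_mono)
    finally show ?thesis .
  qed
  have Sb: "S \<le> (2 * V + 6) * L"
    using S1 S2 S3 g3 g4 g5 unfolding L_def by (simp add: algebra_simps)
  have sumZ: "(\<Sum>i=1..n. Z i x - mu) = (\<Sum>i=1..n. Z i x) - real n * mu" by (simp add: sum_subtractf)
  define zb where "zb = (\<Sum>i=1..n. Z i x) / real n"
  have zb: "\<bar>zb - mu\<bar> < r"
  proof -
    have "zb - mu = (\<Sum>i=1..n. Z i x - mu) / real n" unfolding zb_def sumZ using n0 by (simp add: field_simps)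
    then have "\<bar>zb - mu\<bar> = \<bar>\<Sum>i=1..n. Z i x - mu\<bar> / real n" using n0 by simp
    also have "\<dots> < r" using g1 n0 unfolding r_def L_def by (simp add: field_simps)
    finally show ?thesis .
  qed
  have C1: "2 * V + 9 \<ge> 1" using V_nonneg by simp
  have d: "\<theta> - zb \<ge> (2 * V + 9) * r" using th zb unfolding r_def L_def by (simp add: algebra_simps abs_less_iff)
  have "real n * (zb - \<theta>)^2 \<ge> real n * ((2 * V + 9) * r)^2"
  proof -
    have "((2 * V + 9) * r)^2 \<le> (\<theta> - zb)^2" using d C1 r0 by (intro power_mono) auto
    then show ?thesis using n0 by (simp add: power2_commute mult_left_mono)
  qed
  moreover have "real n * ((2 * V + 9) * r)^2 = (2 * V + 9)^2 * L" using r2 by (simp add: power_mult_distrib)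
  moreover have "(2 * V + 9)^2 \<ge> 2 * V + 9" using C1 by (simp add: power2_eq_square)
  ultimately have mterm: "real n * (zb - \<theta>)^2 \<ge> (2 * V + 9) * L"
    using L0 by (smt (verit) mult_right_mono)
  have Qb: "Q \<le> - L"
    using Qeq Sb mterm g2 L0 unfolding zb_def L_def by (simp add: algebra_simps)
  have "-ln \<alpha> \<le> \<omega> * L" using LK om unfolding L_def by (simp add: field_simps)
  also have "\<omega> * L \<le> - \<omega> * Q"
  proof -
    have "\<omega> * L \<le> \<omega> * (- Q)" using Qb om by (intro mult_left_mono) auto
    then show ?thesis by simp
  qed
  finally have "ln (1 / \<alpha>) \<le> - \<omega> * Q" using al by (simp add: ln_div)
  then have "exp (ln (1 / \<alpha>)) \<le> exp (- \<omega> * Q)" by simp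
  then show ?thesis unfolding G_on_def Q_def[symmetric] using al by simp
qed

end



context gue begin

lemma Tn_meas: "Tn n \<in> borel_measurable M"
  unfolding Tn_def[abs_def] by (rule borel_measurable_sum) (use meas in auto)

lemma main:
  assumes om: "\<omega> > 0" and al: "0 < \<alpha>" "\<alpha> < 1"
  shows "\<exists>C>0. \<forall>\<theta>s :: nat \<Rightarrow> real.
           (\<forall>\<^sub>F n in sequentially. \<theta>s n - mu \<ge> C * (real n / ln (real n)) powr (-1/2))
           \<longrightarrow> (\<lambda>n. measure M {x \<in> space M. G_on \<omega> Z c n (\<theta>s n) x \<ge> 1 / \<alpha>}) \<longlonglongrightarrow> 1"
proof (intro exI[of _ "2*V+10"] conjI allI impI)
  show "2*V+10 > 0" using V_nonneg by simp
  fix \<theta>s :: "nat \<Rightarrow> real"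
  assume ev: "\<forall>\<^sub>F n in sequentially. \<theta>s n - mu \<ge> (2*V+10) * (real n / ln (real n)) powr (-1/2)"
  define E5 where "E5 n = (\<Sum>i=2..n. (V - mt i) / real i)" for n
  define bnd where "bnd n = (V + Ec c + V + V) / ln (real n) + E5 n / ln (real n)" for n
  have bnd_lim: "bnd \<longlonglongrightarrow> 0"
    unfolding bnd_def[abs_def] E5_def using tendsto_add[OF const_div_ln eps_lim] by simp
  have evn: "\<forall>\<^sub>F n in sequentially. n \<ge> 3" by (simp add: eventually_sequentially exI[of _ 3])
  have evL: "\<forall>\<^sub>F n in sequentially. ln (real n) \<ge> - ln \<alpha> / \<omega>"
    using ln_seq_at_top unfolding filterlim_at_top by blast
  have low: "\<forall>\<^sub>F n in sequentially. 1 - bnd n \<le> measure M {x \<in> space M. G_on \<omega> Z c n (\<theta>s n) x \<ge> 1 / \<alpha>}"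
    using ev evn evL
  proof eventually_elim
    case (elim n)
    define L where "L = ln (real n)"
    define r where "r = sqrt (L / real n)"
    have n0: "real n > 0" using elim by simp
    have L0: "L > 0" unfolding L_def using elim by simp
    have r0: "r > 0" unfolding r_def using L0 n0 by simp
    have r2: "r^2 = L / real n" unfolding r_def using L0 n0 by simp
    have thn: "\<theta>s n - mu \<ge> (2*V+10) * sqrt (ln (real n) / real n)"
      using elim powr_conv[of n] by simp
    define A where "A = {x \<in> space M. G_on \<omega> Z c n (\<theta>s n) x \<ge> 1 / \<alpha>}"
    define B1 where "B1 = {x\<in>space M. \<bar>\<Sum>i=1..n. Z i x - mu\<bar> \<ge> real n * r}"
    define B2 where "B2 = {x\<in>space M. (Z 1 x - c)^2 \<ge> L}"
    define B3 where "B3 = {x\<in>space M. R n x \<ge> L}"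
    define B4 where "B4 = {x\<in>space M. \<bar>\<Sum>i=2..n. Yv i x\<bar> \<ge> L}"
    define B5 where "B5 = {x\<in>space M. Tn n x \<ge> L}"
    have m1[measurable]: "(\<lambda>x. \<Sum>i=1..n. Z i x - mu) \<in> borel_measurable M"
      by (rule borel_measurable_sum) (use meas in auto)
    have m2[measurable]: "Z 1 \<in> borel_measurable M" using meas by simp
    have m3[measurable]: "R n \<in> borel_measurable M" using R_int by (rule borel_measurable_integrable)
    have m4[measurable]: "(\<lambda>x. \<Sum>i=2..n. Yv i x) \<in> borel_measurable M"
      by (rule borel_measurable_sum) (use Yv_meas in auto)
    have m5[measurable]: "Tn n \<in> borel_measurable M" by (rule Tn_meas)
    have mG[measurable]: "G_on \<omega> Z c n (\<theta>s n) \<in> borel_measurable M" by (rule G_meas)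
    have sA: "A \<in> sets M" unfolding A_def by measurable
    have s1: "B1 \<in> sets M" unfolding B1_def by measurable
    have s2: "B2 \<in> sets M" unfolding B2_def by measurable
    have s3: "B3 \<in> sets M" unfolding B3_def by measurable
    have s4: "B4 \<in> sets M" unfolding B4_def by measurable
    have s5: "B5 \<in> sets M" unfolding B5_def by measurable
    define U where "U = B1 \<union> (B2 \<union> (B3 \<union> (B4 \<union> B5)))"
    have sU: "U \<in> sets M" unfolding U_def using s1 s2 s3 s4 s5 by auto
    have p1: "prob B1 \<le> V / L"
    proof -
      have "prob B1 \<le> real n * V / (real n * r)^2" unfolding B1_def
        by (rule bound1) (use elim r0 in auto)
      also have "\<dots> = V / L" using n0 L0 r2 by (simp add: power_mult_distrib power2_eq_square field_simps)
      finally show ?thesis .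
    qed
    have p2: "prob B2 \<le> Ec c / L" unfolding B2_def by (rule bound2) (use L0 in auto)
    have p3: "prob B3 \<le> V / L" unfolding B3_def by (rule bound3) (use L0 in auto)
    have p4: "prob B4 \<le> V / L"
    proof -
      have "prob B4 \<le> V * L / L^2" unfolding B4_def L_def
        by (rule bound4) (use elim L0 L_def in auto)
      also have "\<dots> = V / L" using L0 by (simp add: power2_eq_square)
      finally show ?thesis .
    qed
    have p5: "prob B5 \<le> E5 n / L" unfolding B5_def E5_def by (rule bound5) (use L0 in auto)
    have pU: "prob U \<le> prob B1 + prob B2 + prob B3 + prob B4 + prob B5"
    proof -
      have "prob U \<le> prob B1 + prob (B2 \<union> (B3 \<union> (B4 \<union> B5)))"
        unfolding U_def by (rule measure_Un_le) (use s1 s2 s3 s4 s5 in auto)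
      also have "prob (B2 \<union> (B3 \<union> (B4 \<union> B5))) \<le> prob B2 + prob (B3 \<union> (B4 \<union> B5))"
        by (rule measure_Un_le) (use s1 s2 s3 s4 s5 in auto)
      also have "prob (B3 \<union> (B4 \<union> B5)) \<le> prob B3 + prob (B4 \<union> B5)"
        by (rule measure_Un_le) (use s1 s2 s3 s4 s5 in auto)
      also have "prob (B4 \<union> B5) \<le> prob B4 + prob B5"
        by (rule measure_Un_le) (use s1 s2 s3 s4 s5 in auto)
      finally show ?thesis by simp
    qed
    have sub: "space M - U \<subseteq> A"
    proof
      fix x assume x: "x \<in> space M - U"
      have "G_on \<omega> Z c n (\<theta>s n) x \<ge> 1 / \<alpha>"
      proof (rule good_implies[OF elim(2) om al(1) elim(3) thn])
        show "\<bar>\<Sum>i=1..n. Z i x - mu\<bar> < real n * sqrt (ln (real n) / real n)"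
          using x unfolding U_def B1_def r_def L_def by auto
        show "(Z 1 x - c)^2 < ln (real n)" using x unfolding U_def B2_def L_def by auto
        show "R n x < ln (real n)" using x unfolding U_def B3_def L_def by auto
        show "\<bar>\<Sum>i=2..n. Yv i x\<bar> < ln (real n)" using x unfolding U_def B4_def L_def by auto
        show "Tn n x < ln (real n)" using x unfolding U_def B5_def L_def by auto
      qed
      then show "x \<in> A" using x unfolding A_def by auto
    qed
    have "1 - bnd n \<le> 1 - prob U"
      using pU p1 p2 p3 p4 p5 unfolding bnd_def L_def[symmetric] by (simp add: add_divide_distrib)
    also have "\<dots> = prob (space M - U)" using prob_compl[OF sU] by simp
    also have "\<dots> \<le> prob A" by (rule finite_measure_mono[OF sub sA])
    finally show ?case unfolding A_def .
  qed
  have up: "\<forall>\<^sub>F n in sequentially. measure M {x \<in> space M. G_on \<omega> Z c n (\<theta>s n) x \<ge> 1 / \<alpha>} \<le> 1"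
    by (simp add: prob_le_1)
  have l1: "(\<lambda>n. 1 - bnd n) \<longlonglongrightarrow> 1" using tendsto_diff[OF tendsto_const bnd_lim, of 1] by simp
  show "(\<lambda>n. measure M {x \<in> space M. G_on \<omega> Z c n (\<theta>s n) x \<ge> 1 / \<alpha>}) \<longlonglongrightarrow> 1"
    by (rule tendsto_sandwich[OF low up l1 tendsto_const])
qed

end


theorem proposition3:
  fixes M :: "'a measure" and Z :: "nat \<Rightarrow> 'a \<Rightarrow> real"
    and \<theta>star \<omega> \<alpha> c :: real
  assumes "prob_space M"
    and meas: "\<And>i. i \<ge> 1 \<Longrightarrow> Z i \<in> borel_measurable M"
    and indep: "prob_space.indep_vars M (\<lambda>_. borel) Z {1..}"
    and ident: "\<And>i. i \<ge> 1 \<Longrightarrow> distr M borel (Z i) = distr M borel (Z 1)"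
    and second_moment: "integrable M (\<lambda>x. (Z 1 x)^2)"
    and mean: "prob_space.expectation M (Z 1) = \<theta>star"
    and "\<omega> > 0" and "0 < \<alpha>" and "\<alpha> < 1"
  shows "\<exists>C>0. \<forall>\<theta>s :: nat \<Rightarrow> real.
           (\<forall>\<^sub>F n in sequentially. \<theta>s n - \<theta>star \<ge> C * (real n / ln (real n)) powr (-1/2))
           \<longrightarrow> (\<lambda>n. measure M {x \<in> space M. G_on \<omega> Z c n (\<theta>s n) x \<ge> 1 / \<alpha>}) \<longlonglongrightarrow> 1"
proof -
  have g: "gue M Z \<theta>star"
    unfolding gue_def gue_axioms_def using assms(1-6) by blast
  interpret gue M Z \<theta>star by (rule g)
  show ?thesis by (rule main) (rule assms)+
qed


end
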